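(* Let $Q$ be a Moufang loop, $S\le Q$, and $x,y\in Q$. Then $x^{-1}(xS\cap yS)=y^{-1}(xS\cap yS)$.
   Context: A Moufang loop is a loop satisfying $((xy)x)z=x(y(xz))$; such loops have two-sided inverses $x^{-1}$ and the inverse property. For a set $A$, $xA=\{xa:a\in A\}$. *)

theory Defs
  imports Main
begin

definition loop :: "('a \<Rightarrow> 'a \<Rightarrow> 'a) \<Rightarrow> 'a \<Rightarrow> bool" where
  "loop m e \<longleftrightarrow> (\<forall>x. m e x = x \<and> m x e = x)
     \<and> (\<forall>a b. \<exists>!x. m a x = b) \<and> (\<forall>a b. \<exists>!y. m y a = b)"

definition moufang_loop :: "('a \<Rightarrow> 'a \<Rightarrow> 'a) \<Rightarrow> 'a \<Rightarrow> bool" where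
  "moufang_loop m e \<longleftrightarrow> loop m e
     \<and> (\<forall>x y z. m (m (m x y) x) z = m x (m y (m x z)))"

text \<open>Inverse: the unique right inverse (two-sided in a Moufang loop).\<close>
definition loop_inv :: "('a \<Rightarrow> 'a \<Rightarrow> 'a) \<Rightarrow> 'a \<Rightarrow> 'a \<Rightarrow> 'a" where
  "loop_inv m e x = (THE y. m x y = e)"

definition subloop :: "('a \<Rightarrow> 'a \<Rightarrow> 'a) \<Rightarrow> 'a set \<Rightarrow> bool" where
  "subloop m S \<longleftrightarrow> S \<noteq> {} \<and> (\<forall>a\<in>S. \<forall>b\<in>S. m a b \<in> S
     \<and> (\<forall>c. m a c = b \<longrightarrow> c \<in> S) \<and> (\<forall>c. m c a = b \<longrightarrow> c \<in> S))"

definition lmult_set :: "('a \<Rightarrow> 'a \<Rightarrow> 'a) \<Rightarrow> 'a \<Rightarrow> 'a set \<Rightarrow> 'a set" where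
  "lmult_set m x A = (\<lambda>a. m x a) ` A"

end

theory Submission
  imports Defs
begin

context
  fixes m :: "'a \<Rightarrow> 'a \<Rightarrow> 'a" and e :: 'a
  assumes MOUF: "moufang_loop m e"
begin

private abbreviation "i \<equiv> loop_inv m e"

private lemma ids: "m e x = x" "m x e = x"
  using MOUF unfolding moufang_loop_def loop_def by blast+

private lemma M: "m (m (m x y) x) z = m x (m y (m x z))"
  using MOUF unfolding moufang_loop_def by blast

private lemma lcanc: "m a b = m a c \<Longrightarrow> b = c"
  using MOUF unfolding moufang_loop_def loop_def by metis

private lemma ldiv: "\<exists>y. m a y = b"
  using MOUF unfolding moufang_loop_def loop_def by metis

private lemma rinv: "m x (i x) = e"
proof -
  have "\<exists>!y. m x y = e" using MOUF unfolding moufang_loop_def loop_def by blast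
  then show ?thesis unfolding loop_inv_def by (rule theI')
qed

private lemma LIP: "m (i x) (m x z) = z"
proof -
  have "m (m (m x (i x)) x) z = m x (m (i x) (m x z))" by (rule M)
  then have "m x z = m x (m (i x) (m x z))" by (simp add: rinv ids)
  then show ?thesis using lcanc by metis
qed

private lemma linv: "m (i x) x = e"
  using LIP[of x e] by (simp add: ids)

private lemma invinv: "i (i x) = x"
  using linv[of x] rinv[of "i x"] lcanc by metis

private lemma RIP: "m (m u x) (i x) = u"
proof -
  obtain y where y: "m x y = u" using ldiv by blast
  have "m (m (m x y) x) (i x) = m x (m y (m x (i x)))" by (rule M)
  then show ?thesis by (simp add: rinv ids y)
qed

private lemma AAIP: "i (m a b) = m (i b) (i a)"
proof -
  define c where "c = i (m a b)"
  have "m (m a b) c = e" unfolding c_def by (rule rinv)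
  then have "m (m (m a b) c) (i c) = m e (i c)" by simp
  then have ic: "i c = m a b" by (simp add: RIP ids)
  have b: "b = m (i a) (i c)" using ic LIP by simp
  have "m b c = i a" using RIP[of "i a" "i c"] b by (simp add: invinv)
  then have "c = m (i b) (i a)" using LIP[of b c] by simp
  then show ?thesis unfolding c_def .
qed

private lemma R: "m (m (m c a) b) a = m c (m a (m b a))"
proof -
  have "m (m (m (i a) (i b)) (i a)) (i c) = m (i a) (m (i b) (m (i a) (i c)))" by (rule M)
  then have "i (m (m (m (i a) (i b)) (i a)) (i c)) = i (m (i a) (m (i b) (m (i a) (i c))))" by simp
  then show ?thesis by (simp add: AAIP invinv)
qed

private lemma incl:
  assumes SL: "subloop m S"
  shows "lmult_set m (i x) (lmult_set m x S \<inter> lmult_set m y S)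
       \<subseteq> lmult_set m (i y) (lmult_set m x S \<inter> lmult_set m y S)"
proof
  fix q assume "q \<in> lmult_set m (i x) (lmult_set m x S \<inter> lmult_set m y S)"
  then obtain s t where s: "s \<in> S" and t: "t \<in> S" and eq: "m x s = m y t"
    and q: "q = m (i x) (m x s)"
    unfolding lmult_set_def by blast
  have qs: "q = s" using q LIP by simp
  obtain a where a: "a \<in> S" using SL unfolding subloop_def by blast
  have eS: "e \<in> S" using SL a unfolding subloop_def by (metis ids(2))
  have itS: "i t \<in> S" using SL t eS rinv unfolding subloop_def by metis
  define r where "r = m s (m (i t) s)"
  have rS: "r \<in> S" using SL s itS unfolding subloop_def r_def by metis
  define w where "w = m x s"
  have yw: "y = m w (i t)" using RIP[of y t] eq unfolding w_def by simp
  have xw: "x = m w (i s)" using RIP[of x s] unfolding w_def by simp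
  have "m x r = m (m w (i s)) (m s (m (i t) s))" unfolding r_def xw ..
  also have "\<dots> = m (m (m (m w (i s)) s) (i t)) s" by (rule R[symmetric])
  also have "m (m w (i s)) s = w" using RIP[of w "i s"] by (simp only: invinv)
  finally have "m x r = m y s" using yw by simp
  then have "m y s \<in> lmult_set m x S \<inter> lmult_set m y S"
    using rS s unfolding lmult_set_def by (metis IntI image_eqI)
  moreover have "q = m (i y) (m y s)" using qs LIP by simp
  ultimately show "q \<in> lmult_set m (i y) (lmult_set m x S \<inter> lmult_set m y S)"
    unfolding lmult_set_def by blast
qed

lemma main_eq:
  assumes "subloop m S"
  shows "lmult_set m (i x) (lmult_set m x S \<inter> lmult_set m y S)
       = lmult_set m (i y) (lmult_set m x S \<inter> lmult_set m y S)"
  using incl[OF assms, of x y] incl[OF assms, of y x] by (simp add: Int_commute)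

end

theorem lemma6p7:
  fixes m :: "'a \<Rightarrow> 'a \<Rightarrow> 'a" and e :: 'a and S :: "'a set" and x y :: 'a
  assumes "moufang_loop m e" and "subloop m S"
  shows "lmult_set m (loop_inv m e x) (lmult_set m x S \<inter> lmult_set m y S)
       = lmult_set m (loop_inv m e y) (lmult_set m x S \<inter> lmult_set m y S)"
  using main_eq[OF assms] .

end
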